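(* Let $1\le r\le s\le t$ and let $u=ABCd$, $v=A'B'C'd'$ be vertices of $E3C(r,s,t)$ with $A=A'$, $B\ne B'$, $C\ne C'$ and $d\ne d'$. Then there exist $2r+2$ pairwise internally disjoint $u$–$v$ paths in $E3C(r,s,t)$, each of length at most $s+t+7$.
   Context: The exchanged 3-ary $n$-cube $E3C(r,s,t)$ ($r,s,t\ge1$, $n=r+s+t+1$): vertices are strings written $x=ABCd$ with $A\in\{0,1,2\}^r$, $B\in\{0,1,2\}^s$, $C\in\{0,1,2\}^t$, $d\in\{0,1,2\}$. Two distinct vertices $x=ABCd$, $y=A'B'C'd'$ are adjacent iff one of: (E0) $A=A',B=B',C=C'$ and $d\ne d'$; (E1) $d=d'=0$, $A=A'$, $B=B'$ and $C,C'$ differ in exactly one position; (E2) $d=d'=1$, $A=A'$, $C=C'$ and $B,B'$ differ in exactly one position; (E3) $d=d'=2$, $B=B'$, $C=C'$ and $A,A'$ differ in exactly one position. Paths are internally disjoint if they share no vertices other than their endpoints; length = number of edges. *)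

theory Defs
  imports Main
begin

type_synonym e3c_vertex = "nat list \<times> nat list \<times> nat list \<times> nat"

definition tern_strings :: "nat \<Rightarrow> nat list set" where
  "tern_strings k = {X. length X = k \<and> (\<forall>x\<in>set X. x < 3)}"

definition e3c_verts :: "nat \<Rightarrow> nat \<Rightarrow> nat \<Rightarrow> e3c_vertex set" where
  "e3c_verts r s t = {(A,B,C,d). A \<in> tern_strings r \<and> B \<in> tern_strings s
       \<and> C \<in> tern_strings t \<and> d < 3}"

definition differ_one :: "nat list \<Rightarrow> nat list \<Rightarrow> bool" where
  "differ_one X Y \<longleftrightarrow> length X = length Y \<and> card {i. i < length X \<and> X ! i \<noteq> Y ! i} = 1"

definition e3c_adj :: "nat \<Rightarrow> nat \<Rightarrow> nat \<Rightarrow> e3c_vertex \<Rightarrow> e3c_vertex \<Rightarrow> bool" where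
  "e3c_adj r s t x y \<longleftrightarrow> x \<in> e3c_verts r s t \<and> y \<in> e3c_verts r s t \<and> x \<noteq> y \<and>
     (case x of (A,B,C,d) \<Rightarrow> case y of (A',B',C',d') \<Rightarrow>
        (A = A' \<and> B = B' \<and> C = C' \<and> d \<noteq> d')
      \<or> (d = 0 \<and> d' = 0 \<and> A = A' \<and> B = B' \<and> differ_one C C')
      \<or> (d = 1 \<and> d' = 1 \<and> A = A' \<and> C = C' \<and> differ_one B B')
      \<or> (d = 2 \<and> d' = 2 \<and> B = B' \<and> C = C' \<and> differ_one A A'))"

text \<open>A path from u to v, given as its list of vertices (distinct, consecutive ones adjacent).
  Its length is the number of edges, i.e. length p - 1.\<close>
definition e3c_path :: "nat \<Rightarrow> nat \<Rightarrow> nat \<Rightarrow> e3c_vertex \<Rightarrow> e3c_vertex \<Rightarrow> e3c_vertex list \<Rightarrow> bool" where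
  "e3c_path r s t u v p \<longleftrightarrow> p \<noteq> [] \<and> hd p = u \<and> last p = v \<and> distinct p \<and>
     (\<forall>i. Suc i < length p \<longrightarrow> e3c_adj r s t (p ! i) (p ! Suc i))"

definition internally_disjoint :: "'v \<Rightarrow> 'v \<Rightarrow> 'v list \<Rightarrow> 'v list \<Rightarrow> bool" where
  "internally_disjoint u v p q \<longleftrightarrow> set p \<inter> set q \<subseteq> {u, v}"

end

theory Submission
  imports Defs
begin

definition ham :: "nat list \<Rightarrow> nat list \<Rightarrow> nat" where
  "ham X Y = card {i. i < length X \<and> X ! i \<noteq> Y ! i}"

lemma ham_Nil[simp]: "ham [] Y = 0" by (simp add: ham_def)

lemma set_Suc_split: "{i. i < Suc n \<and> Q i} = (if Q 0 then {0} else {}) \<union> Suc ` {i. i < n \<and> Q (Suc i)}"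
  by (auto simp: image_iff less_Suc_eq_0_disj)

lemma ham_Cons[simp]: "ham (x#xs) (y#ys) = (if x = y then 0 else 1) + ham xs ys"
  unfolding ham_def
  by (simp only: length_Cons set_Suc_split nth_Cons_0 nth_Cons_Suc)
     (subst card_Un_disjoint, auto simp: card_image)

lemma ham_self[simp]: "ham X X = 0" by (simp add: ham_def)

lemma ham_le: "ham X Y \<le> length X"
  unfolding ham_def by (rule order.trans[OF card_mono[of "{..<length X}"]]) auto

lemma ham_0_iff: "length X = length Y \<Longrightarrow> ham X Y = 0 \<longleftrightarrow> X = Y"
  by (induction X Y rule: list_induct2) auto

lemma ham_sym: "length X = length Y \<Longrightarrow> ham X Y = ham Y X"
  by (induction X Y rule: list_induct2) auto

lemma differ_one_ham: "differ_one X Y \<longleftrightarrow> length X = length Y \<and> ham X Y = 1"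
  by (simp add: differ_one_def ham_def)

lemma ham_update: "j < length X \<Longrightarrow> ham X (X[j := c]) = (if c = X ! j then 0 else 1)"
proof -
  assume j: "j < length X"
  have "{i. i < length X \<and> X ! i \<noteq> X[j := c] ! i} = (if c = X ! j then {} else {j})"
    using j by (auto simp: nth_list_update)
  then show ?thesis by (simp add: ham_def)
qed

fun route :: "nat list \<Rightarrow> nat list \<Rightarrow> nat list list" where
  "route (x#xs) (y#ys) = (if x = y then map (Cons x) (route xs ys)
      else (x#xs) # map (Cons y) (route xs ys))"
| "route xs ys = [xs]"

lemma route_ne[simp]: "route X Y \<noteq> []"
  by (induction X Y rule: route.induct) auto

lemma hd_route[simp]: "hd (route X Y) = X"
  by (induction X Y rule: route.induct) (auto simp: hd_map)

lemma last_route: "length X = length Y \<Longrightarrow> last (route X Y) = Y"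
  by (induction X Y rule: list_induct2) (auto simp: last_map)

lemma length_route: "length X = length Y \<Longrightarrow> length (route X Y) = Suc (ham X Y)"
  by (induction X Y rule: list_induct2) auto

lemma set_route: "length X = length Y \<Longrightarrow> Z \<in> set (route X Y) \<Longrightarrow>
   length Z = length X \<and> set Z \<subseteq> set X \<union> set Y"
proof (induction X Y arbitrary: Z rule: list_induct2)
  case Nil then show ?case by simp
next
  case (Cons x xs y ys)
  have "length W = length xs \<and> set W \<subseteq> set xs \<union> set ys" if "W \<in> set (route xs ys)" for W
    using Cons.IH that Cons.hyps by simp
  then have h: "\<And>W w. W \<in> set (route xs ys) \<Longrightarrow> w \<in> set W \<Longrightarrow> w \<in> set xs \<or> w \<in> set ys"
    by blast
  show ?case using Cons.prems Cons.hyps \<open>\<And>W. W \<in> set (route xs ys) \<Longrightarrow> _\<close>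
    by (cases "x = y") (auto split: if_splits dest: h)
qed

lemma route_nth_len: "length X = length Y \<Longrightarrow> i < length (route X Y) \<Longrightarrow> length (route X Y ! i) = length X"
  using set_route nth_mem by blast

lemma ham_route_nth: "length X = length Y \<Longrightarrow> i < length (route X Y) \<Longrightarrow>
   ham X (route X Y ! i) = i \<and> ham (route X Y ! i) Y = ham X Y - i"
proof (induction X Y arbitrary: i rule: list_induct2)
  case Nil then show ?case by simp
next
  case (Cons x xs y ys)
  show ?case
  proof (cases "x = y")
    case True
    then show ?thesis using Cons by auto
  next
    case False
    show ?thesis
    proof (cases i)
      case 0 then show ?thesis using False by simp
    next
      case (Suc j)
      then have "j < length (route xs ys)" using Cons.prems False by simp
      then show ?thesis using Cons.IH[of j] Suc False by (simp add: length_route Cons.hyps)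
    qed
  qed
qed

lemma distinct_route: "length X = length Y \<Longrightarrow> distinct (route X Y)"
  unfolding distinct_conv_nth by (metis ham_route_nth)

lemma route_unique: "length X = length Y \<Longrightarrow> Z \<in> set (route X Y) \<Longrightarrow> W \<in> set (route X Y) \<Longrightarrow>
   ham X Z = ham X W \<Longrightarrow> Z = W"
  by (metis ham_route_nth in_set_conv_nth)

lemma succ_route: "length X = length Y \<Longrightarrow> successively differ_one (route X Y)"
proof (induction X Y rule: list_induct2)
  case Nil then show ?case by simp
next
  case (Cons x xs y ys)
  have sm: "successively differ_one (map (Cons z) (route xs ys))" for z
    using Cons.IH by (simp add: successively_map differ_one_ham)
  show ?case
  proof (cases "x = y")
    case True then show ?thesis using sm by simp
  next
    case False
    have "route xs ys = xs # tl (route xs ys)" by (metis hd_route list.collapse route_ne)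
    then have "map (Cons y) (route xs ys) = (y # xs) # map (Cons y) (tl (route xs ys))" by (metis list.simps(9))
    then show ?thesis using sm[of y] False
      by (simp add: successively_Cons differ_one_ham)
  qed
qed

definition tern where "tern X \<longleftrightarrow> (\<forall>x\<in>set X. x < 3)"

lemma route_tern: "length X = length Y \<Longrightarrow> X \<in> tern_strings n \<Longrightarrow> Y \<in> tern_strings n \<Longrightarrow>
   Z \<in> set (route X Y) \<Longrightarrow> Z \<in> tern_strings n"
  using set_route[of X Y Z] unfolding tern_strings_def by blast

definition nb :: "nat list \<Rightarrow> nat \<Rightarrow> nat list" where
  "nb X k = X[k div 2 := (X ! (k div 2) + 1 + k mod 2) mod 3]"

definition nbrs :: "nat list \<Rightarrow> nat list list" where
  "nbrs X = map (nb X) [0..<2 * length X]"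

lemma mod3_ne: "x < 3 \<Longrightarrow> (b::nat) < 2 \<Longrightarrow> (x + 1 + b) mod 3 \<noteq> x"
  by presburger

lemma mod3_inj: "x < 3 \<Longrightarrow> (b::nat) < 2 \<Longrightarrow> b' < 2 \<Longrightarrow> (x + 1 + b) mod 3 = (x + 1 + b') mod 3 \<Longrightarrow> b = b'"
  by presburger

lemma nb_props: assumes "X \<in> tern_strings n" "k < 2 * n"
  shows "nb X k \<in> tern_strings n \<and> ham X (nb X k) = 1"
proof -
  have j: "k div 2 < length X" using assms by (auto simp: tern_strings_def)
  have x: "X ! (k div 2) < 3" using assms j by (auto simp: tern_strings_def)
  have ne: "(X ! (k div 2) + 1 + k mod 2) mod 3 \<noteq> X ! (k div 2)" using x mod3_ne by simp
  have "set (nb X k) \<subseteq> insert ((X ! (k div 2) + 1 + k mod 2) mod 3) (set X)"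
    by (simp add: nb_def set_update_subset_insert)
  then have "\<forall>x\<in>set (nb X k). x < 3" using assms by (auto simp: tern_strings_def)
  then show ?thesis using assms j ne by (auto simp: tern_strings_def ham_update nb_def)
qed

lemma nb_inj: assumes "X \<in> tern_strings n" "k < 2 * n" "k' < 2 * n" "nb X k = nb X k'"
  shows "k = k'"
proof -
  have j: "k div 2 < length X" "k' div 2 < length X" using assms by (auto simp: tern_strings_def)
  have x: "X ! (k div 2) < 3" "X ! (k' div 2) < 3" using assms j by (auto simp: tern_strings_def)
  have ne: "(X ! (k div 2) + 1 + k mod 2) mod 3 \<noteq> X ! (k div 2)" using x mod3_ne by simp
  have ne': "(X ! (k' div 2) + 1 + k' mod 2) mod 3 \<noteq> X ! (k' div 2)" using x mod3_ne by simp
  have dd: "k div 2 = k' div 2"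
  proof (rule ccontr)
    assume "k div 2 \<noteq> k' div 2"
    then have "nb X k ! (k div 2) \<noteq> nb X k' ! (k div 2)" using j ne by (simp add: nb_def nth_list_update)
    then show False using assms(4) by simp
  qed
  have "nb X k ! (k div 2) = nb X k' ! (k div 2)" using assms(4) by simp
  then have "(X ! (k div 2) + 1 + k mod 2) mod 3 = (X ! (k div 2) + 1 + k' mod 2) mod 3"
    using j dd by (simp add: nb_def)
  then have "k mod 2 = k' mod 2" using x mod3_inj by simp
  then show ?thesis using dd by (metis div_mult_mod_eq)
qed

lemma nbrs_props: assumes "X \<in> tern_strings n"
  shows "length (nbrs X) = 2 * n" "distinct (nbrs X)"
    "Z \<in> set (nbrs X) \<Longrightarrow> Z \<in> tern_strings n \<and> ham X Z = 1"
proof -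
  have l: "length X = n" using assms by (simp add: tern_strings_def)
  show "length (nbrs X) = 2 * n" using l by (simp add: nbrs_def)
  show "distinct (nbrs X)" unfolding nbrs_def distinct_map using l nb_inj[OF assms]
    by (auto simp: inj_on_def)
  show "Z \<in> set (nbrs X) \<Longrightarrow> Z \<in> tern_strings n \<and> ham X Z = 1"
    using l nb_props[OF assms] by (auto simp: nbrs_def)
qed

abbreviation ts where "ts \<equiv> tern_strings"

lemma ts_len: "X \<in> ts n \<Longrightarrow> length X = n" by (simp add: tern_strings_def)

lemma differ_one_ne: "differ_one X Y \<Longrightarrow> X \<noteq> Y"
  by (auto simp: differ_one_ham)

lemma adj0: "A \<in> ts r \<Longrightarrow> B \<in> ts s \<Longrightarrow> X \<in> ts t \<Longrightarrow> Y \<in> ts t \<Longrightarrow> differ_one X Y \<Longrightarrow>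
   e3c_adj r s t (A,B,X,0) (A,B,Y,0)"
  by (auto simp: e3c_adj_def e3c_verts_def dest: differ_one_ne)
lemma adj1: "A \<in> ts r \<Longrightarrow> C \<in> ts t \<Longrightarrow> X \<in> ts s \<Longrightarrow> Y \<in> ts s \<Longrightarrow> differ_one X Y \<Longrightarrow>
   e3c_adj r s t (A,X,C,1) (A,Y,C,1)"
  by (auto simp: e3c_adj_def e3c_verts_def dest: differ_one_ne)
lemma adj2: "B \<in> ts s \<Longrightarrow> C \<in> ts t \<Longrightarrow> X \<in> ts r \<Longrightarrow> Y \<in> ts r \<Longrightarrow> differ_one X Y \<Longrightarrow>
   e3c_adj r s t (X,B,C,2) (Y,B,C,2)"
  by (auto simp: e3c_adj_def e3c_verts_def dest: differ_one_ne)
lemma adjE: "A \<in> ts r \<Longrightarrow> B \<in> ts s \<Longrightarrow> C \<in> ts t \<Longrightarrow> d < 3 \<Longrightarrow> e < 3 \<Longrightarrow> d \<noteq> e \<Longrightarrow>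
   e3c_adj r s t (A,B,C,d) (A,B,C,e)"
  by (auto simp: e3c_adj_def e3c_verts_def)

lemma nbr_differ: "X \<in> ts n \<Longrightarrow> Y \<in> ts n \<Longrightarrow> ham X Y = 1 \<Longrightarrow> differ_one X Y"
  by (simp add: differ_one_ham ts_len)
lemma nbr_differ': "X \<in> ts n \<Longrightarrow> Y \<in> ts n \<Longrightarrow> ham X Y = 1 \<Longrightarrow> differ_one Y X"
  by (simp add: differ_one_ham ts_len ham_sym)

lemma seg0: assumes "A \<in> ts r" "B \<in> ts s" "X \<in> ts t" "Y \<in> ts t"
  shows "successively (e3c_adj r s t) (map (\<lambda>Z. (A,B,Z,0::nat)) (route X Y))"
proof -
  have l: "length X = length Y" using assms by (simp add: ts_len)
  show ?thesis unfolding successively_map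
  proof (rule successively_mono[OF succ_route[OF l]])
    fix Z W assume "Z \<in> set (route X Y)" "W \<in> set (route X Y)" "differ_one Z W"
    then show "e3c_adj r s t (A,B,Z,0) (A,B,W,0)"
      using adj0[OF assms(1,2)] route_tern[OF l assms(3,4)] by blast
  qed
qed
lemma seg1: assumes "A \<in> ts r" "C \<in> ts t" "X \<in> ts s" "Y \<in> ts s"
  shows "successively (e3c_adj r s t) (map (\<lambda>Z. (A,Z,C,1::nat)) (route X Y))"
proof -
  have l: "length X = length Y" using assms by (simp add: ts_len)
  show ?thesis unfolding successively_map
  proof (rule successively_mono[OF succ_route[OF l]])
    fix Z W assume "Z \<in> set (route X Y)" "W \<in> set (route X Y)" "differ_one Z W"
    then show "e3c_adj r s t (A,Z,C,1) (A,W,C,1)"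
      using adj1[OF assms(1,2)] route_tern[OF l assms(3,4)] by blast
  qed
qed

lemma path_iff: "e3c_path r s t u v p \<longleftrightarrow>
   p \<noteq> [] \<and> hd p = u \<and> last p = v \<and> distinct p \<and> successively (e3c_adj r s t) p"
  by (simp add: e3c_path_def successively_conv_nth)

lemma differ_one_sym: "differ_one X Y \<Longrightarrow> differ_one Y X"
  by (simp add: differ_one_ham ham_sym)

lemma adj_sym: "e3c_adj r s t x y \<Longrightarrow> e3c_adj r s t y x"
  unfolding e3c_adj_def
  by (cases x; cases y) (simp; metis differ_one_sym)

definition pw :: "('a \<Rightarrow> 'a \<Rightarrow> bool) \<Rightarrow> 'a list \<Rightarrow> bool" where
  "pw R P \<longleftrightarrow> (\<forall>i<length P. \<forall>j<length P. i \<noteq> j \<longrightarrow> R (P ! i) (P ! j))"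

lemma pw_Nil[simp]: "pw R []" by (simp add: pw_def)

lemma pw_Cons: "pw R xs \<Longrightarrow> (\<forall>y\<in>set xs. R x y \<and> R y x) \<Longrightarrow> pw R (x # xs)"
  unfolding pw_def by (auto simp: nth_Cons split: nat.splits)

lemma pw_append: "pw R xs \<Longrightarrow> pw R ys \<Longrightarrow> (\<forall>x\<in>set xs. \<forall>y\<in>set ys. R x y \<and> R y x) \<Longrightarrow> pw R (xs @ ys)"
  unfolding pw_def
  by (auto simp: nth_append)

lemma pw_map_upt: "(\<And>i j. i < n \<Longrightarrow> j < n \<Longrightarrow> i \<noteq> j \<Longrightarrow> R (f i) (f j)) \<Longrightarrow> pw R (map f [0..<n])"
  unfolding pw_def by auto

definition good where
  "good r s t u v P \<longleftrightarrow> length P = 2 * r + 2 \<and>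
     (\<forall>p\<in>set P. e3c_path r s t u v p \<and> length p - 1 \<le> s + t + 7) \<and>
     pw (internally_disjoint u v) P"

lemma good_rev: assumes "good r s t u v P" shows "good r s t v u (map rev P)"
proof -
  have a: "e3c_path r s t v u (rev p)" if "e3c_path r s t u v p" for p
    using that unfolding path_iff
    by (auto simp: hd_rev last_rev elim: successively_mono intro: adj_sym)
  have b: "internally_disjoint v u (rev p) (rev q)" if "internally_disjoint u v p q" for p q
    using that by (auto simp: internally_disjoint_def)
  show ?thesis using assms a b unfolding good_def pw_def by auto
qed

fun sw :: "e3c_vertex \<Rightarrow> e3c_vertex" where
  "sw (A,B,C,d) = (A,C,B, if d = 0 then 1 else if d = 1 then 0 else d)"

lemma sw_inj: "inj sw"
proof (rule injI)
  fix x y assume "sw x = sw y"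
  then show "x = y" by (cases x; cases y) (auto split: if_splits)
qed

lemma sw_adj: "e3c_adj r s t x y \<Longrightarrow> e3c_adj r t s (sw x) (sw y)"
  unfolding e3c_adj_def e3c_verts_def
  by (cases x; cases y) (auto split: if_splits)

lemma good_sw: assumes "good r s t u v P" shows "good r t s (sw u) (sw v) (map (map sw) P)"
proof -
  have a: "e3c_path r t s (sw u) (sw v) (map sw p)" if "e3c_path r s t u v p" for p
    using that unfolding path_iff
    by (auto simp: hd_map last_map distinct_map inj_on_subset[OF sw_inj] successively_map
       elim: successively_mono intro: sw_adj)
  have b: "internally_disjoint (sw u) (sw v) (map sw p) (map sw q)" if "internally_disjoint u v p q" for p q
  proof -
    have "set (map sw p) \<inter> set (map sw q) = sw ` (set p \<inter> set q)"
      by (simp add: image_Int[OF sw_inj])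
    then show ?thesis using that by (auto simp: internally_disjoint_def)
  qed
  show ?thesis using assms a b unfolding good_def pw_def by (auto simp: add.commute)
qed

lemma length_filter_ne: "distinct xs \<Longrightarrow> length (filter (\<lambda>z. z \<noteq> a) xs) \<ge> length xs - 1"
proof -
  assume d: "distinct xs"
  have "length (filter (\<lambda>z. z \<noteq> a) xs) = card (set xs - {a})"
  proof -
    have e: "set xs \<inter> {x. x \<noteq> a} = set xs - {a}" "{x \<in> set xs. x \<noteq> a} = set xs - {a}"
      "{x. x \<noteq> a} \<inter> set xs = set xs - {a}" by auto
    show ?thesis using d by (simp add: distinct_length_filter e)
  qed
  also have "\<dots> \<ge> card (set xs) - 1" by (simp add: card_Diff_singleton_if)
  finally show ?thesis using d by (simp add: distinct_card)
qed

lemma internally_disjoint_sym: "internally_disjoint u v p q \<Longrightarrow> internally_disjoint u v q p"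
  by (auto simp: internally_disjoint_def)

locale cfg =
  fixes r s t :: nat and A B C B' C' :: "nat list"
  assumes r1: "1 \<le> r" and rs: "r \<le> s" and rt: "r \<le> t"
  and vA: "A \<in> ts r" and vB: "B \<in> ts s" and vB': "B' \<in> ts s"
  and vC: "C \<in> ts t" and vC': "C' \<in> ts t"
  and BB: "B \<noteq> B'" and CC: "C \<noteq> C'"
begin

lemma lens: "length A = r" "length B = s" "length B' = s" "length C = t" "length C' = t"
  using vA vB vB' vC vC' by (auto simp: ts_len)

lemma hB: "1 \<le> ham B B'" "ham B B' \<le> s"
  using ham_0_iff[of B B'] BB lens ham_le[of B B'] by auto
lemma hC: "1 \<le> ham C C'" "ham C C' \<le> t"
  using ham_0_iff[of C C'] CC lens ham_le[of C C'] by auto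

definition "B1 = route B B' ! 1"
definition "N = route C C' ! (ham C C' - 1)"

lemma nbB_notin: assumes "Z \<in> ts s" "ham B Z = 1" "Z \<noteq> B1" shows "Z \<notin> set (route B B')"
proof
  assume z: "Z \<in> set (route B B')"
  have l: "1 < length (route B B')" using hB lens by (simp add: length_route)
  then have b1: "B1 \<in> set (route B B')" "ham B B1 = 1" unfolding B1_def
    using ham_route_nth[of B B' 1] lens by auto
  show False using route_unique[of B B' Z B1] z b1 assms lens by auto
qed

lemma nbC_notin: assumes "Z \<in> ts t" "ham C' Z = 1" "Z \<noteq> N" shows "Z \<notin> set (route C C')"
proof
  assume z: "Z \<in> set (route C C')"
  then obtain i where i: "i < length (route C C')" "Z = route C C' ! i" by (auto simp: in_set_conv_nth)
  have "ham Z C' = 1" using assms ham_sym[of Z C'] lens by (simp add: ts_len)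
  then have "ham C C' - i = 1" using ham_route_nth[of C C' i] i lens by simp
  then have "i = ham C C' - 1" by simp
  then show False using i assms(3) unfolding N_def by simp
qed

definition "Al = nbrs A"
definition "Tl = take (2 * r - 1) (filter (\<lambda>Z. Z \<noteq> N) (nbrs C'))"
definition "Bl = take (2 * r - 1) (filter (\<lambda>Z. Z \<noteq> B1) (nbrs B))"

lemma Al: "length Al = 2 * r" "distinct Al" "Z \<in> set Al \<Longrightarrow> Z \<in> ts r \<and> Z \<noteq> A"
proof -
  show "length Al = 2 * r" "distinct Al" using nbrs_props[OF vA] unfolding Al_def by auto
  assume "Z \<in> set Al"
  then have "Z \<in> ts r" "ham A Z = 1" using nbrs_props(3)[OF vA] unfolding Al_def by auto
  moreover have "Z \<noteq> A" proof assume "Z = A" then show False using \<open>ham A Z = 1\<close> by simp qed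
  ultimately show "Z \<in> ts r \<and> Z \<noteq> A" by simp
qed

lemma Tl: "length Tl = 2 * r - 1" "distinct Tl"
  "Z \<in> set Tl \<Longrightarrow> Z \<in> ts t \<and> Z \<noteq> C' \<and> differ_one Z C' \<and> Z \<notin> set (route C C') \<and> Z \<noteq> C"
proof -
  have "length (filter (\<lambda>Z. Z \<noteq> N) (nbrs C')) \<ge> 2 * t - 1"
    using length_filter_ne[of "nbrs C'" N] nbrs_props[OF vC'] by simp
  then show "length Tl = 2 * r - 1" unfolding Tl_def using rt by simp
  show "distinct Tl" unfolding Tl_def using nbrs_props[OF vC'] by simp
  assume z: "Z \<in> set Tl"
  then have z': "Z \<in> set (nbrs C')" "Z \<noteq> N" unfolding Tl_def by (auto dest: in_set_takeD)
  have a: "Z \<in> ts t" "ham C' Z = 1" using nbrs_props[OF vC'] z' by auto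
  have b: "Z \<notin> set (route C C')" using nbC_notin a z' by auto
  have "C \<in> set (route C C')" by (metis hd_in_set hd_route route_ne)
  then show "Z \<in> ts t \<and> Z \<noteq> C' \<and> differ_one Z C' \<and> Z \<notin> set (route C C') \<and> Z \<noteq> C"
    using a b nbr_differ'[OF vC' a(1) a(2)] by (auto dest: differ_one_ne)
qed

lemma Bl: "length Bl = 2 * r - 1" "distinct Bl"
  "Z \<in> set Bl \<Longrightarrow> Z \<in> ts s \<and> Z \<noteq> B \<and> differ_one B Z \<and> Z \<notin> set (route B B') \<and> Z \<noteq> B'"
proof -
  have "length (filter (\<lambda>Z. Z \<noteq> B1) (nbrs B)) \<ge> 2 * s - 1"
    using length_filter_ne[of "nbrs B" B1] nbrs_props[OF vB] by simp
  then show "length Bl = 2 * r - 1" unfolding Bl_def using rs by simp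
  show "distinct Bl" unfolding Bl_def using nbrs_props[OF vB] by simp
  assume z: "Z \<in> set Bl"
  then have z': "Z \<in> set (nbrs B)" "Z \<noteq> B1" unfolding Bl_def by (auto dest: in_set_takeD)
  have a: "Z \<in> ts s" "ham B Z = 1" using nbrs_props[OF vB] z' by auto
  have b: "Z \<notin> set (route B B')" using nbB_notin a z' by auto
  have "B' \<in> set (route B B')" using last_route[of B B'] lens by (metis last_in_set route_ne)
  then show "Z \<in> ts s \<and> Z \<noteq> B \<and> differ_one B Z \<and> Z \<notin> set (route B B') \<and> Z \<noteq> B'"
    using a b nbr_differ[OF vB a(1) a(2)] by (auto dest: differ_one_ne)
qed

end

context cfg begin

definition "mid1 = map (\<lambda>Y. (A,Y,C,1::nat)) (route B B') @ map (\<lambda>X. (A,B',X,0::nat)) (route C C')"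
definition "mid0 = map (\<lambda>X. (A,B,X,0::nat)) (route C C') @ map (\<lambda>Y. (A,Y,C',1::nat)) (route B B') @ [(A,B',C',0)]"
definition "tagq Ak = [(A,B,C,2::nat),(Ak,B,C,2)] @ map (\<lambda>X. (Ak,B,X,0)) (route C C')
   @ map (\<lambda>Y. (Ak,Y,C',1)) (route B B') @ [(Ak,B',C',2),(A,B',C',2),(A,B',C',0)]"
definition "tagp Ak T = [(A,B,C,2::nat),(Ak,B,C,2)] @ map (\<lambda>X. (Ak,B,X,0)) (route C T)
   @ map (\<lambda>Y. (Ak,Y,T,1)) (route B B') @ [(Ak,B',T,2),(A,B',T,2),(A,B',T,0),(A,B',C',0)]"
definition "up Bk T = [(A,B,C,1::nat),(A,Bk,C,1)] @ map (\<lambda>X. (A,Bk,X,0)) (route C T)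
   @ map (\<lambda>Y. (A,Y,T,1)) (route Bk B') @ [(A,B',T,0),(A,B',C',0)]"

lemmas base = vA vB vB' vC vC' BB CC BB[symmetric] CC[symmetric]

lemma seg1': "A \<in> ts r \<Longrightarrow> C \<in> ts t \<Longrightarrow> X \<in> ts s \<Longrightarrow> Y \<in> ts s \<Longrightarrow>
   successively (e3c_adj r s t) (map (\<lambda>Z. (A,Z,C,Suc 0)) (route X Y))"
  using seg1[of A r C t X s Y] by simp

lemma Al': "Z \<in> set Al \<Longrightarrow> Z \<in> ts r \<and> Z \<noteq> A \<and> differ_one A Z \<and> differ_one Z A \<and> length Z = r"
  using Al(3)[of Z] nbrs_props(3)[OF vA, of Z] unfolding Al_def
  by (auto simp: ts_len intro: nbr_differ nbr_differ' vA)

lemma hdC: "hd (route C X) = C" by simp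
lemma inj1: "inj_on (\<lambda>Y. (a::nat list, Y, c::nat list, d::nat)) S" by (auto simp: inj_on_def)
lemma inj0: "inj_on (\<lambda>X. (a::nat list, b::nat list, X, d::nat)) S" by (auto simp: inj_on_def)

lemmas psimps = successively_append_iff successively_Cons hd_map last_map last_route
   distinct_map inj1 inj0 distinct_route adjE seg0 seg1 seg1' lens

lemma S0: "X \<in> ts r \<Longrightarrow> Y \<in> ts s \<Longrightarrow> P \<in> ts t \<Longrightarrow> Q \<in> ts t \<Longrightarrow>
    successively (e3c_adj r s t) (map (\<lambda>Z. (X,Y,Z,0::nat)) (route P Q))"
  by (rule seg0)
lemma S1: "X \<in> ts r \<Longrightarrow> Y \<in> ts t \<Longrightarrow> P \<in> ts s \<Longrightarrow> Q \<in> ts s \<Longrightarrow>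
    successively (e3c_adj r s t) (map (\<lambda>Z. (X,Z,Y,1::nat)) (route P Q))"
  by (rule seg1)

lemma path_mid1: "e3c_path r s t (A,B,C,1) (A,B',C',0) mid1"
  unfolding path_iff mid1_def using base S0[of A B C C'] S1[of A C B B']
  by (auto simp: psimps)

lemma path_mid1': "e3c_path r s t (A,B,C,2) (A,B',C',0) ((A,B,C,2) # mid1)"
  using path_mid1 base S0[of A B C C'] S1[of A C B B'] unfolding path_iff mid1_def
  by (auto simp: psimps)

lemma path_mid0: "e3c_path r s t (A,B,C,d) (A,B',C',0) ((A,B,C,d) # mid0)" if "d = 1 \<or> d = 2"
  using base that S0[of A B C C'] S1[of A C' B B'] unfolding path_iff mid0_def
  by (auto simp: psimps)

lemma path_tagq: assumes "Ak \<in> set Al" shows "e3c_path r s t (A,B,C,2) (A,B',C',0) (tagq Ak)"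
  using base Al'[OF assms] S0[of Ak B C C'] S1[of Ak C' B B'] unfolding path_iff tagq_def
  by (auto simp: psimps adj2)

lemma path_tagq': assumes "Ak \<in> set Al" shows "e3c_path r s t (A,B,C,1) (A,B',C',0) ((A,B,C,1) # tagq Ak)"
  using base Al'[OF assms] path_tagq[OF assms] S0[of Ak B C C'] S1[of Ak C' B B'] unfolding path_iff tagq_def
  by (auto simp: psimps adj2)

lemma path_tagp: assumes "Ak \<in> set Al" "T \<in> set Tl" shows "e3c_path r s t (A,B,C,2) (A,B',C',0) (tagp Ak T)"
proof -
  have T: "T \<in> ts t" "T \<noteq> C'" "differ_one T C'" "T \<notin> set (route C C')" "T \<noteq> C" "length T = t"
    using Tl(3)[OF assms(2)] by (auto simp: ts_len)
  show ?thesis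
  using base Al'[OF assms(1)] T S0[of Ak B C T] S1[of Ak T B B'] unfolding path_iff tagp_def
  by (auto simp: psimps adj2 adj0)
qed

lemma path_up: assumes "Bk \<in> set Bl" "T \<in> set Tl" shows "e3c_path r s t (A,B,C,1) (A,B',C',0) (up Bk T)"
proof -
  have T: "T \<in> ts t" "T \<noteq> C'" "differ_one T C'" "T \<notin> set (route C C')" "T \<noteq> C" "length T = t"
    using Tl(3)[OF assms(2)] by (auto simp: ts_len)
  have Bk: "Bk \<in> ts s" "Bk \<noteq> B" "differ_one B Bk" "Bk \<notin> set (route B B')" "Bk \<noteq> B'" "length Bk = s"
    using Bl(3)[OF assms(1)] by (auto simp: ts_len)
  have a1: "e3c_adj r s t (A,B,C,1) (A,Bk,C,1)" by (rule adj1) (use base Bk in auto)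
  show ?thesis
  using a1 base T Bk S0[of A Bk C T] S1[of A T Bk B'] unfolding path_iff up_def
  by (auto simp: psimps adj1 adj0)
qed

end

context cfg begin

lemma hl: "ham B B' \<le> s" "ham C C' \<le> t" "length (route B B') = Suc (ham B B')" "length (route C C') = Suc (ham C C')"
  using hB hC lens by (auto simp: length_route)

lemma len_T: "T \<in> set Tl \<Longrightarrow> length (route C T) \<le> Suc t"
  using Tl(3)[of T] lens ham_le[of C T] by (auto simp: length_route ts_len)
lemma len_Bk: "Bk \<in> set Bl \<Longrightarrow> length (route Bk B') \<le> Suc s"
  using Bl(3)[of Bk] lens ham_le[of Bk B'] by (auto simp: length_route ts_len)

lemma L_mid1: "length mid1 - 1 \<le> s + t + 7" "length ((A,B,C,2) # mid1) - 1 \<le> s + t + 7"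
  using hl by (auto simp: mid1_def)
lemma L_mid0: "length ((A,B,C,d) # mid0) - 1 \<le> s + t + 7"
  using hl by (auto simp: mid0_def)
lemma L_tagq: "length (tagq Ak) - 1 \<le> s + t + 7" "length ((A,B,C,1) # tagq Ak) - 1 \<le> s + t + 7"
  using hl by (auto simp: tagq_def)
lemma L_tagp: "T \<in> set Tl \<Longrightarrow> length (tagp Ak T) - 1 \<le> s + t + 7"
  using hl len_T[of T] by (auto simp: tagp_def)
lemma L_up: "T \<in> set Tl \<Longrightarrow> Bk \<in> set Bl \<Longrightarrow> length (up Bk T) - 1 \<le> s + t + 7"
  using hl len_T[of T] len_Bk[of Bk] by (auto simp: up_def)

lemma Tf: "T \<in> set Tl \<Longrightarrow> T \<noteq> C' \<and> T \<notin> set (route C C') \<and> T \<noteq> C"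
  using Tl(3) by blast
lemma Bf: "Bk \<in> set Bl \<Longrightarrow> Bk \<noteq> B \<and> Bk \<notin> set (route B B') \<and> Bk \<noteq> B'"
  using Bl(3) by blast
lemma Af: "Ak \<in> set Al \<Longrightarrow> Ak \<noteq> A"
  using Al(3) by blast

abbreviation "u2 \<equiv> (A,B,C,2::nat)"
abbreviation "u1 \<equiv> (A,B,C,1::nat)"
abbreviation "vv \<equiv> (A,B',C',0::nat)"

lemmas dsimps = internally_disjoint_def mid1_def mid0_def tagq_def tagp_def up_def

lemma D1: "internally_disjoint u2 vv (u2 # mid1) (u2 # mid0)"
  using BB CC unfolding dsimps by auto
lemma D2: "Ak \<in> set Al \<Longrightarrow> internally_disjoint u2 vv (u2 # mid1) (tagq Ak)"
  using BB CC Af[of Ak] unfolding dsimps by auto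
lemma D3: "Ak \<in> set Al \<Longrightarrow> internally_disjoint u2 vv (u2 # mid0) (tagq Ak)"
  using BB CC Af[of Ak] unfolding dsimps by auto
lemma D4: "Ak \<in> set Al \<Longrightarrow> T \<in> set Tl \<Longrightarrow> internally_disjoint u2 vv (u2 # mid1) (tagp Ak T)"
  using BB CC Af[of Ak] Tf[of T] unfolding dsimps by auto
lemma D5: "Ak \<in> set Al \<Longrightarrow> T \<in> set Tl \<Longrightarrow> internally_disjoint u2 vv (u2 # mid0) (tagp Ak T)"
  using BB CC Af[of Ak] Tf[of T] unfolding dsimps by auto
lemma D6: "Ak \<in> set Al \<Longrightarrow> Aj \<in> set Al \<Longrightarrow> Ak \<noteq> Aj \<Longrightarrow> T \<in> set Tl \<Longrightarrow>
    internally_disjoint u2 vv (tagq Ak) (tagp Aj T)"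
  using BB CC Af[of Ak] Af[of Aj] Tf[of T] unfolding dsimps by auto
lemma D7: "Ak \<in> set Al \<Longrightarrow> Aj \<in> set Al \<Longrightarrow> Ak \<noteq> Aj \<Longrightarrow> T \<in> set Tl \<Longrightarrow> T' \<in> set Tl \<Longrightarrow> T \<noteq> T' \<Longrightarrow>
    internally_disjoint u2 vv (tagp Ak T) (tagp Aj T')"
  using BB CC Af[of Ak] Af[of Aj] Tf[of T] Tf[of T'] unfolding dsimps by auto

lemma E1: "internally_disjoint u1 vv mid1 (u1 # mid0)"
  using BB CC unfolding dsimps by auto
lemma E2: "Ak \<in> set Al \<Longrightarrow> internally_disjoint u1 vv mid1 (u1 # tagq Ak)"
  using BB CC Af[of Ak] unfolding dsimps by auto
lemma E3: "Ak \<in> set Al \<Longrightarrow> internally_disjoint u1 vv (u1 # mid0) (u1 # tagq Ak)"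
  using BB CC Af[of Ak] unfolding dsimps by auto
lemma E4: "Bk \<in> set Bl \<Longrightarrow> T \<in> set Tl \<Longrightarrow> internally_disjoint u1 vv mid1 (up Bk T)"
  using BB CC Bf[of Bk] Tf[of T] unfolding dsimps by auto
lemma E5: "Bk \<in> set Bl \<Longrightarrow> T \<in> set Tl \<Longrightarrow> internally_disjoint u1 vv (u1 # mid0) (up Bk T)"
  using BB CC Bf[of Bk] Tf[of T] unfolding dsimps by auto
lemma E6: "Ak \<in> set Al \<Longrightarrow> Bk \<in> set Bl \<Longrightarrow> T \<in> set Tl \<Longrightarrow> internally_disjoint u1 vv (u1 # tagq Ak) (up Bk T)"
  using BB CC Af[of Ak] Bf[of Bk] Tf[of T] unfolding dsimps by auto
lemma E7: "Bk \<in> set Bl \<Longrightarrow> Bj \<in> set Bl \<Longrightarrow> Bk \<noteq> Bj \<Longrightarrow> T \<in> set Tl \<Longrightarrow> T' \<in> set Tl \<Longrightarrow> T \<noteq> T' \<Longrightarrow>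
    internally_disjoint u1 vv (up Bk T) (up Bj T')"
  using BB CC Bf[of Bk] Bf[of Bj] Tf[of T] Tf[of T'] unfolding dsimps by auto

end

context cfg begin

lemma a_in: "k < 2 * r \<Longrightarrow> Al ! k \<in> set Al" using Al(1) by simp
lemma t_in: "k < 2 * r - 1 \<Longrightarrow> Tl ! k \<in> set Tl" using Tl(1) by simp
lemma b_in: "k < 2 * r - 1 \<Longrightarrow> Bl ! k \<in> set Bl" using Bl(1) by simp
lemma a_ne: "i < 2 * r \<Longrightarrow> j < 2 * r \<Longrightarrow> i \<noteq> j \<Longrightarrow> Al ! i \<noteq> Al ! j"
  using Al(1,2) nth_eq_iff_index_eq by metis
lemma t_ne: "i < 2 * r - 1 \<Longrightarrow> j < 2 * r - 1 \<Longrightarrow> i \<noteq> j \<Longrightarrow> Tl ! i \<noteq> Tl ! j"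
  using Tl(1,2) nth_eq_iff_index_eq by metis
lemma b_ne: "i < 2 * r - 1 \<Longrightarrow> j < 2 * r - 1 \<Longrightarrow> i \<noteq> j \<Longrightarrow> Bl ! i \<noteq> Bl ! j"
  using Bl(1,2) nth_eq_iff_index_eq by metis

lemma ex20: "\<exists>P. good r s t (A,B,C,2) (A,B',C',0) P"
proof -
  let ?R = "internally_disjoint u2 vv"
  let ?q = "tagq (Al ! (2 * r - 1))"
  let ?xs = "[u2 # mid1, u2 # mid0, ?q]"
  let ?ys = "map (\<lambda>k. tagp (Al ! k) (Tl ! k)) [0..<2 * r - 1]"
  have lst: "2 * r - 1 < 2 * r" using r1 by simp
  have qa: "Al ! (2 * r - 1) \<in> set Al" using a_in[OF lst] .
  have p1: "pw ?R ?xs"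
    using D1 D2[OF qa] D3[OF qa] by (intro pw_Cons) (auto intro: internally_disjoint_sym)
  have p2: "pw ?R ?ys"
  proof (rule pw_map_upt)
    fix i j assume ij: "i < 2 * r - 1" "j < 2 * r - 1" "i \<noteq> j"
    show "?R (tagp (Al ! i) (Tl ! i)) (tagp (Al ! j) (Tl ! j))"
      by (rule D7) (use ij a_in t_in a_ne t_ne in auto)
  qed
  have p3: "\<forall>x\<in>set ?xs. \<forall>y\<in>set ?ys. ?R x y \<and> ?R y x"
  proof (intro ballI)
    fix x y assume x: "x \<in> set ?xs" and y: "y \<in> set ?ys"
    then obtain k where k: "k < 2 * r - 1" "y = tagp (Al ! k) (Tl ! k)" by auto
    have ak: "Al ! k \<in> set Al" "Tl ! k \<in> set Tl" "Al ! (2 * r - 1) \<noteq> Al ! k"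
      using k a_in t_in a_ne[of "2 * r - 1" k] lst by auto
    have "?R x y" using x k ak D4 D5 D6[OF qa] by auto
    then show "?R x y \<and> ?R y x" by (auto intro: internally_disjoint_sym)
  qed
  have pw: "pw ?R (?xs @ ?ys)" using pw_append[OF p1 p2 p3] .
  have paths: "\<forall>p\<in>set (?xs @ ?ys). e3c_path r s t u2 vv p \<and> length p - 1 \<le> s + t + 7"
  proof
    fix p assume "p \<in> set (?xs @ ?ys)"
    then show "e3c_path r s t u2 vv p \<and> length p - 1 \<le> s + t + 7"
      using path_mid1' path_mid0[of 2] path_tagq[OF qa] path_tagp a_in t_in
        L_mid1 L_mid0 L_tagq L_tagp lst
      by auto
  qed
  have "length (?xs @ ?ys) = 2 * r + 2" using r1 by simp
  then show ?thesis using pw paths unfolding good_def by blast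
qed

lemma ex10: "\<exists>P. good r s t (A,B,C,1) (A,B',C',0) P"
proof -
  let ?R = "internally_disjoint u1 vv"
  let ?q = "u1 # tagq (Al ! 0)"
  let ?xs = "[mid1, u1 # mid0, ?q]"
  let ?ys = "map (\<lambda>k. up (Bl ! k) (Tl ! k)) [0..<2 * r - 1]"
  have qa: "Al ! 0 \<in> set Al" using a_in r1 by simp
  have p1: "pw ?R ?xs"
    using E1 E2[OF qa] E3[OF qa] by (intro pw_Cons) (auto intro: internally_disjoint_sym)
  have p2: "pw ?R ?ys"
  proof (rule pw_map_upt)
    fix i j assume ij: "i < 2 * r - 1" "j < 2 * r - 1" "i \<noteq> j"
    show "?R (up (Bl ! i) (Tl ! i)) (up (Bl ! j) (Tl ! j))"
      by (rule E7) (use ij b_in t_in b_ne t_ne in auto)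
  qed
  have p3: "\<forall>x\<in>set ?xs. \<forall>y\<in>set ?ys. ?R x y \<and> ?R y x"
  proof (intro ballI)
    fix x y assume x: "x \<in> set ?xs" and y: "y \<in> set ?ys"
    then obtain k where k: "k < 2 * r - 1" "y = up (Bl ! k) (Tl ! k)" by auto
    have ak: "Bl ! k \<in> set Bl" "Tl ! k \<in> set Tl"
      using k b_in t_in by auto
    have "?R x y" using x k ak E4 E5 E6[OF qa] by auto
    then show "?R x y \<and> ?R y x" by (auto intro: internally_disjoint_sym)
  qed
  have pw: "pw ?R (?xs @ ?ys)" using pw_append[OF p1 p2 p3] .
  have paths: "\<forall>p\<in>set (?xs @ ?ys). e3c_path r s t u1 vv p \<and> length p - 1 \<le> s + t + 7"
  proof
    fix p assume "p \<in> set (?xs @ ?ys)"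
    then show "e3c_path r s t u1 vv p \<and> length p - 1 \<le> s + t + 7"
      using path_mid1 path_mid0[of 1] path_tagq'[OF qa] path_up b_in t_in
        L_mid1 L_mid0 L_tagq L_up
      by auto
  qed
  have "length (?xs @ ?ys) = 2 * r + 2" using r1 by simp
  then show ?thesis using pw paths unfolding good_def by blast
qed

end

theorem lemma17:
  fixes r s t :: nat and A A' B B' C C' :: "nat list" and d d' :: nat
  assumes "1 \<le> r" and "r \<le> s" and "s \<le> t"
    and "(A, B, C, d) \<in> e3c_verts r s t" and "(A', B', C', d') \<in> e3c_verts r s t"
    and "A = A'" and "B \<noteq> B'" and "C \<noteq> C'" and "d \<noteq> d'"
  shows "\<exists>P :: e3c_vertex list list. length P = 2 * r + 2 \<and>
     (\<forall>i < length P. e3c_path r s t (A, B, C, d) (A', B', C', d') (P ! i)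
                     \<and> length (P ! i) - 1 \<le> s + t + 7) \<and>
     (\<forall>i < length P. \<forall>j < length P. i \<noteq> j \<longrightarrow>
        internally_disjoint (A, B, C, d) (A', B', C', d') (P ! i) (P ! j))"
proof -
  have v: "A \<in> ts r" "B \<in> ts s" "C \<in> ts t" "d < 3" "B' \<in> ts s" "C' \<in> ts t" "d' < 3"
    using assms(4,5,6) by (auto simp: e3c_verts_def)
  have rt: "r \<le> t" using assms(2,3) by simp
  have c1: "cfg r s t A B C B' C'" by unfold_locales (use v assms rt in auto)
  have c2: "cfg r t s A C B C' B'" by unfold_locales (use v assms rt in auto)
  have c3: "cfg r s t A B' C' B C" by unfold_locales (use v assms rt in auto)
  have c4: "cfg r t s A C' B' C B" by unfold_locales (use v assms rt in auto)
  have main: "\<exists>P. good r s t (A,B,C,d) (A,B',C',d') P"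
  proof -
    have "d = 0 \<or> d = 1 \<or> d = 2" "d' = 0 \<or> d' = 1 \<or> d' = 2" using v by auto
    then consider "d = 2" "d' = 0" | "d = 1" "d' = 0" | "d = 2" "d' = 1" | "d = 0" "d' = 1"
      | "d = 0" "d' = 2" | "d = 1" "d' = 2" using assms(9) by auto
    then show ?thesis
    proof cases
      case 1 then show ?thesis using cfg.ex20[OF c1] by simp
    next
      case 2 then show ?thesis using cfg.ex10[OF c1] by simp
    next
      case 3
      obtain P where "good r t s (A,C,B,2) (A,C',B',0) P" using cfg.ex20[OF c2] by blast
      from good_sw[OF this] show ?thesis using 3 by auto
    next
      case 4
      obtain P where "good r t s (A,C,B,1) (A,C',B',0) P" using cfg.ex10[OF c2] by blast
      from good_sw[OF this] show ?thesis using 4 by auto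
    next
      case 5
      obtain P where "good r s t (A,B',C',2) (A,B,C,0) P" using cfg.ex20[OF c3] by blast
      from good_rev[OF this] show ?thesis using 5 by auto
    next
      case 6
      obtain P where "good r t s (A,C',B',2) (A,C,B,0) P" using cfg.ex20[OF c4] by blast
      from good_rev[OF good_sw[OF this]] show ?thesis using 6 by auto
    qed
  qed
  then obtain P where P: "good r s t (A,B,C,d) (A,B',C',d') P" by blast
  show ?thesis
    using P unfolding good_def pw_def assms(6)[symmetric] by (intro exI[of _ P]) auto
qed

end
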